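(* Let $p$ be the probability measure on $\mathbb{N}=\{1,2,\ldots\}$ given by $p(n)=cn^{-5/4}$, where $1/c=\sum_{n=1}^\infty n^{-5/4}$. Then $p$ has finite Shannon entropy, and for every $\varepsilon>0$ there exist constants $K_\varepsilon,N_\varepsilon\in\mathbb{N}$ such that for every natural number $m\ge K_\varepsilon$ there exists a set $E_{\varepsilon,m}\subseteq\mathbb{N}^m$ with the following properties: (1) $p^{\times m}(E_{\varepsilon,m})\ge 1-\varepsilon$, where $p^{\times m}$ is the $m$-fold product measure; (2) for every $s=(s_1,\ldots,s_m)\in E_{\varepsilon,m}$, $\max\{s_1,\ldots,s_{K_\varepsilon}\}\le N_\varepsilon$; (3) for every $s\in E_{\varepsilon,m}$ and every $K_\varepsilon\le k\le m$, $\max\{s_1,\ldots,s_k\}\ge k^2$; (4) for every $s\in E_{\varepsilon,m}$ and every $K_\varepsilon\le k\le m$, the maximum of $\{s_1,\ldots,s_k\}$ is attained at exactly one index in $(s_1,\ldots,s_k)$.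
   Context: The Shannon entropy of a probability measure $p$ on $\mathbb{N}$ is $-\sum_n p(n)\log p(n)$. *)

theory Defs
  imports "HOL-Analysis.Analysis"
begin

definition zc :: real where
  "zc = 1 / (\<Sum>n. real (Suc n) powr (-5/4))"

text \<open>The probability mass function p(n) = c n^(-5/4) on N = {1,2,...};
  we put p 0 = 0 since 0 is not in the support.\<close>
definition p :: "nat \<Rightarrow> real" where
  "p n = (if n = 0 then 0 else zc * real n powr (-5/4))"

text \<open>Finite Shannon entropy: the series of -p(n) log p(n) converges
  (Isabelle has ln 0 = 0, matching the convention 0 log 0 = 0; all terms are
  nonnegative, so convergence is the same as finiteness).\<close>
definition finite_entropy :: "(nat \<Rightarrow> real) \<Rightarrow> bool" where
  "finite_entropy f \<longleftrightarrow> summable (\<lambda>n. - (f n * ln (f n)))"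

text \<open>N^m, represented as lists of length m with entries >= 1;
  s_i is s ! (i-1).\<close>
definition seqs :: "nat \<Rightarrow> nat list set" where
  "seqs m = {s. length s = m \<and> (\<forall>x\<in>set s. x \<ge> 1)}"

definition prod_measure :: "nat \<Rightarrow> nat list set \<Rightarrow> real" where
  "prod_measure m E = infsum (\<lambda>s. \<Prod>i<m. p (s ! i)) E"

end

theory Submission
  imports Defs
begin


lemma S0_summable: "summable (\<lambda>n. real (Suc n) powr (-5/4))"
proof -
  have "summable (\<lambda>n. real n powr (-5/4))" using summable_real_powr_iff[of "-5/4"] by simp
  then have "summable (\<lambda>n. real (n+1) powr (-5/4))" using summable_iff_shift[where k=1, of "\<lambda>n. real n powr (-5/4)"] by simp
  then show ?thesis by simp
qed

lemma S0_pos: "0 < (\<Sum>n. real (Suc n) powr (-5/4))"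
  by (rule suminf_pos[OF S0_summable]) simp

lemma zc_pos: "zc > 0" unfolding zc_def using S0_pos by simp

lemma p_nonneg: "p n \<ge> 0" unfolding p_def using zc_pos by simp

lemma p_pos: "n \<ge> 1 \<Longrightarrow> p n > 0" unfolding p_def using zc_pos by simp

lemma p_sums: "p sums 1"
proof -
  have "(\<lambda>n. real (Suc n) powr (-5/4)) sums (\<Sum>n. real (Suc n) powr (-5/4))"
    using S0_summable summable_sums by blast
  then have "(\<lambda>n. zc * real (Suc n) powr (-5/4)) sums (zc * (\<Sum>n. real (Suc n) powr (-5/4)))"
    by (rule sums_mult)
  moreover have "zc * (\<Sum>n. real (Suc n) powr (-5/4)) = 1" unfolding zc_def using S0_pos by simp
  ultimately have "(\<lambda>n. p (Suc n)) sums 1" unfolding p_def by simp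
  then show ?thesis using sums_Suc_iff[of p 1] by (simp add: p_def)
qed

lemma p_has_sum: "(p has_sum 1) UNIV"
  using sums_nonneg_imp_has_sum[OF p_sums] p_nonneg by blast

lemma p_summable_on: "p summable_on A"
  using summable_on_subset_banach[of p UNIV A] p_has_sum has_sum_imp_summable by blast

definition PP :: "nat set \<Rightarrow> real" where "PP X = infsum p X"

lemma PP_nonneg: "PP X \<ge> 0" unfolding PP_def by (simp add: infsum_nonneg p_nonneg)

lemma PP_UNIV: "PP UNIV = 1" unfolding PP_def using p_has_sum infsumI by blast

lemma PP_le1: "PP X \<le> 1"
proof -
  have "infsum p X \<le> infsum p UNIV"
    by (rule infsum_mono_neutral) (auto simp: p_summable_on p_nonneg)
  then show ?thesis using PP_UNIV unfolding PP_def by simp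
qed

lemma PP_has_sum: "(p has_sum PP X) X" unfolding PP_def using p_summable_on by (simp add: has_sum_infsum)

lemma has_sum_times_nonneg:
  fixes f g :: "_ \<Rightarrow> real"
  assumes f: "(f has_sum a) A" and g: "(g has_sum b) B" and f0: "\<And>x. x\<in>A \<Longrightarrow> f x \<ge> 0"
    and g0: "\<And>y. y\<in>B \<Longrightarrow> g y \<ge> 0"
  shows "((\<lambda>(x,y). f x * g y) has_sum (a*b)) (A \<times> B)"
proof (rule has_sum_SigmaI[where g="\<lambda>x. f x * b"])
  show "((\<lambda>y. (\<lambda>(x, y). f x * g y) (x, y)) has_sum f x * b) B" if "x \<in> A" for x
    using has_sum_cmult_right[OF g, of "f x"] by simp
  show "((\<lambda>x. f x * b) has_sum a * b) A" using has_sum_cmult_left[OF f] .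
  show "(\<lambda>(x, y). f x * g y) summable_on A \<times> B"
  proof (rule nonneg_bdd_above_summable_on)
    show "\<And>x. x \<in> A \<times> B \<Longrightarrow> 0 \<le> (case x of (x, y) \<Rightarrow> f x * g y)"
      using f0 g0 by auto
    show "bdd_above (sum (\<lambda>(x, y). f x * g y) ` {F. F \<subseteq> A \<times> B \<and> finite F})"
    proof (rule bdd_aboveI2)
      fix F assume F: "F \<in> {F. F \<subseteq> A \<times> B \<and> finite F}"
      then have fin: "finite F" and sub: "F \<subseteq> A \<times> B" by auto
      have "sum (\<lambda>(x, y). f x * g y) F \<le> sum (\<lambda>(x, y). f x * g y) (fst ` F \<times> snd ` F)"
      proof (rule sum_mono2)
        show "finite (fst ` F \<times> snd ` F)" using fin by simp
        show "F \<subseteq> fst ` F \<times> snd ` F" by (rule subset_fst_snd)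
        show "0 \<le> (case z of (x, y) \<Rightarrow> f x * g y)" if "z \<in> fst ` F \<times> snd ` F - F" for z
        proof -
          have "fst z \<in> A" "snd z \<in> B" using that sub by auto
          then show ?thesis using f0 g0 by (auto simp: case_prod_beta)
        qed
      qed
      also have "\<dots> = sum f (fst ` F) * sum g (snd ` F)"
        by (simp only: sum_product sum.cartesian_product)
      also have "\<dots> \<le> a * b"
      proof (rule mult_mono)
        show "sum f (fst ` F) \<le> a" by (rule finite_sum_le_has_sum[OF f]) (use fin sub f0 in auto)
        show "sum g (snd ` F) \<le> b" by (rule finite_sum_le_has_sum[OF g]) (use fin sub g0 in auto)
        show "0 \<le> a" using has_sum_nonneg[OF f] f0 by blast
        show "0 \<le> sum g (snd ` F)" by (rule sum_nonneg) (use sub g0 in auto)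
      qed
      finally show "sum (\<lambda>(x, y). f x * g y) F \<le> a * b" .
    qed
  qed
qed



definition cyl :: "nat \<Rightarrow> (nat \<Rightarrow> nat set) \<Rightarrow> nat list set" where
  "cyl m A = {s. length s = m \<and> (\<forall>i<m. s!i \<in> A i)}"

lemma cyl_Suc: "cyl (Suc m) A = (\<lambda>(x,xs). x#xs) ` (A 0 \<times> cyl m (\<lambda>i. A (Suc i)))"
proof (rule set_eqI)
  fix s
  show "s \<in> cyl (Suc m) A \<longleftrightarrow> s \<in> (\<lambda>(x,xs). x#xs) ` (A 0 \<times> cyl m (\<lambda>i. A (Suc i)))"
  proof
    assume "s \<in> cyl (Suc m) A"
    then obtain x xs where s: "s = x # xs" "length xs = m" and h: "\<forall>i<Suc m. s!i \<in> A i"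
      unfolding cyl_def by (auto simp: length_Suc_conv)
    then have "x \<in> A 0" "\<forall>i<m. xs!i \<in> A (Suc i)" by auto
    then show "s \<in> (\<lambda>(x,xs). x#xs) ` (A 0 \<times> cyl m (\<lambda>i. A (Suc i)))"
      using s unfolding cyl_def by (auto intro!: image_eqI[where x="(x,xs)"])
  next
    assume "s \<in> (\<lambda>(x,xs). x#xs) ` (A 0 \<times> cyl m (\<lambda>i. A (Suc i)))"
    then obtain x xs where s: "s = x # xs" "x \<in> A 0" "xs \<in> cyl m (\<lambda>i. A (Suc i))" by auto
    then show "s \<in> cyl (Suc m) A" unfolding cyl_def by (auto simp: less_Suc_eq_0_disj)
  qed
qed

lemma cyl_has_sum: "((\<lambda>s. \<Prod>i<m. p (s!i)) has_sum (\<Prod>i<m. PP (A i))) (cyl m A)"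
proof (induction m arbitrary: A)
  case 0
  have "cyl 0 A = {[]}" unfolding cyl_def by auto
  then show ?case using has_sum_finite[of "{[]}" "\<lambda>s. \<Prod>i<0. p (s!i)"] by simp
next
  case (Suc m)
  have h: "((\<lambda>(x,xs). p x * (\<Prod>i<m. p (xs!i))) has_sum (PP (A 0) * (\<Prod>i<m. PP (A (Suc i)))))
      (A 0 \<times> cyl m (\<lambda>i. A (Suc i)))"
    by (rule has_sum_times_nonneg[OF PP_has_sum Suc.IH]) (auto simp: p_nonneg prod_nonneg)
  have inj: "inj_on (\<lambda>(x,xs). x#xs) (A 0 \<times> cyl m (\<lambda>i. A (Suc i)))" by (auto simp: inj_on_def)
  have "(((\<lambda>s. \<Prod>i<Suc m. p (s!i)) \<circ> (\<lambda>(x,xs). x#xs)) has_sum (PP (A 0) * (\<Prod>i<m. PP (A (Suc i)))))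
      (A 0 \<times> cyl m (\<lambda>i. A (Suc i)))"
    using h by (rule has_sum_cong[THEN iffD1, rotated]) (auto simp del: prod.lessThan_Suc simp add: prod.lessThan_Suc_shift)
  then have "((\<lambda>s. \<Prod>i<Suc m. p (s!i)) has_sum (PP (A 0) * (\<Prod>i<m. PP (A (Suc i))))) (cyl (Suc m) A)"
    unfolding cyl_Suc using has_sum_reindex[OF inj] by blast
  then show ?case by (simp del: prod.lessThan_Suc add: prod.lessThan_Suc_shift)
qed



definition wt :: "nat \<Rightarrow> nat list \<Rightarrow> real" where "wt m = (\<lambda>s. \<Prod>i<m. p (s!i))"

lemma wt_nonneg: "wt m s \<ge> 0" unfolding wt_def by (simp add: prod_nonneg p_nonneg)

definition WW :: "nat \<Rightarrow> nat list set" where "WW m = cyl m (\<lambda>_. UNIV)"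

lemma WW_eq: "WW m = {s. length s = m}" unfolding WW_def cyl_def by auto

lemma WW_has_sum: "(wt m has_sum 1) (WW m)"
  using cyl_has_sum[of m "\<lambda>_. UNIV"] unfolding WW_def wt_def by (simp add: PP_UNIV)

lemma wt_summable: "X \<subseteq> WW m \<Longrightarrow> wt m summable_on X"
  by (rule summable_on_subset_banach[OF has_sum_imp_summable[OF WW_has_sum]])

definition fb :: "nat \<Rightarrow> nat list set \<Rightarrow> real \<Rightarrow> bool" where
  "fb m X b \<longleftrightarrow> (\<forall>F. finite F \<longrightarrow> F \<subseteq> X \<longrightarrow> sum (wt m) F \<le> b)"

lemma fb_cyl: "fb m (cyl m A) (\<Prod>i<m. PP (A i))"
  unfolding fb_def
proof (intro allI impI)
  fix F assume "finite F" "F \<subseteq> cyl m A"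
  then show "sum (wt m) F \<le> (\<Prod>i<m. PP (A i))"
    by (rule finite_sum_le_has_sum[OF cyl_has_sum[of m A, folded wt_def]]) (use wt_nonneg in auto)
qed

lemma fb_mono:
  assumes "fb m Y b" "X \<subseteq> Y" "b \<le> b'" shows "fb m X b'"
  unfolding fb_def
proof (intro allI impI)
  fix F assume "finite F" "F \<subseteq> X"
  then have "sum (wt m) F \<le> b" using assms(1,2) unfolding fb_def by blast
  then show "sum (wt m) F \<le> b'" using assms(3) by linarith
qed

lemma fb_UN:
  assumes "\<And>j. j \<in> J \<Longrightarrow> fb m (B j) (c j)"
    and "\<And>G. finite G \<Longrightarrow> G \<subseteq> J \<Longrightarrow> sum c G \<le> b"
  shows "fb m (\<Union>j\<in>J. B j) b"
  unfolding fb_def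
proof (intro allI impI)
  fix F assume F: "finite F" "F \<subseteq> (\<Union>j\<in>J. B j)"
  have "\<forall>s\<in>F. \<exists>j. j \<in> J \<and> s \<in> B j" using F(2) by blast
  then obtain h where h0: "\<forall>s\<in>F. h s \<in> J \<and> s \<in> B (h s)" by (metis bchoice)
  have h: "h s \<in> J \<and> s \<in> B (h s)" if "s \<in> F" for s using h0 that by blast
  have "sum (wt m) F = (\<Sum>j\<in>h ` F. sum (wt m) {s\<in>F. h s = j})"
    by (rule sum.image_gen[OF F(1)])
  also have "\<dots> \<le> (\<Sum>j\<in>h ` F. c j)"
  proof (rule sum_mono)
    fix j assume j: "j \<in> h ` F"
    then obtain s0 where s0: "s0 \<in> F" "j = h s0" by blast
    then have jJ: "j \<in> J" using h by blast
    have sub: "{s\<in>F. h s = j} \<subseteq> B j" using h by blast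
    have fin: "finite {s\<in>F. h s = j}" using F(1) by simp
    have "fb m (B j) (c j)" using assms(1)[OF jJ] .
    then show "sum (wt m) {s\<in>F. h s = j} \<le> c j"
      unfolding fb_def using fin sub by blast
  qed
  also have "\<dots> \<le> b"
  proof (rule assms(2))
    show "finite (h ` F)" using F(1) by simp
    show "h ` F \<subseteq> J" using h by blast
  qed
  finally show "sum (wt m) F \<le> b" .
qed

lemma fb_Un: "fb m X a \<Longrightarrow> fb m Y b \<Longrightarrow> fb m (X \<union> Y) (a + b)"
  unfolding fb_def
proof (intro allI impI)
  fix F assume X: "\<forall>F. finite F \<longrightarrow> F \<subseteq> X \<longrightarrow> sum (wt m) F \<le> a"
    and Y: "\<forall>F. finite F \<longrightarrow> F \<subseteq> Y \<longrightarrow> sum (wt m) F \<le> b" and F: "finite F" "F \<subseteq> X \<union> Y"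
  have "sum (wt m) F = sum (wt m) (F \<inter> X) + sum (wt m) (F - X)"
    using F(1) by (metis sum.Int_Diff)
  also have "\<dots> \<le> a + b"
  proof (rule add_mono)
    show "sum (wt m) (F \<inter> X) \<le> a" using X[rule_format, of "F \<inter> X"] F(1) by simp
    have "F - X \<subseteq> Y" using F(2) by blast
    then show "sum (wt m) (F - X) \<le> b" using Y[rule_format, of "F - X"] F(1) by simp
  qed
  finally show "sum (wt m) F \<le> a + b" .
qed

lemma fb_zero:
  assumes "\<And>s. s \<in> X \<Longrightarrow> wt m s = 0" shows "fb m X 0"
  unfolding fb_def
proof (intro allI impI)
  fix F assume "finite F" "F \<subseteq> X"
  then have "sum (wt m) F = 0" using assms by (intro sum.neutral) auto
  then show "sum (wt m) F \<le> 0" by simp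
qed

lemma measure_from_fb:
  assumes "E \<subseteq> WW m" "fb m (WW m - E) b"
  shows "prod_measure m E \<ge> 1 - b"
proof -
  have pm: "prod_measure m E = infsum (wt m) E" unfolding prod_measure_def wt_def by simp
  have s1: "wt m summable_on E" using wt_summable assms(1) .
  have s2: "wt m summable_on (WW m - E)" by (rule wt_summable) auto
  have u: "infsum (wt m) (E \<union> (WW m - E)) = infsum (wt m) E + infsum (wt m) (WW m - E)"
    by (rule infsum_Un_disjoint[OF s1 s2]) auto
  have e: "E \<union> (WW m - E) = WW m" using assms(1) by auto
  have t: "infsum (wt m) (WW m) = 1" by (rule infsumI[OF WW_has_sum])
  have fbb: "\<And>F. finite F \<Longrightarrow> F \<subseteq> WW m - E \<Longrightarrow> sum (wt m) F \<le> b"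
    using assms(2) unfolding fb_def by blast
  have "infsum (wt m) (WW m - E) \<le> b"
    by (rule infsum_le_finite_sums[OF s2 fbb])
  moreover have "infsum (wt m) E + infsum (wt m) (WW m - E) = 1" using u unfolding e t by simp
  ultimately show ?thesis unfolding pm by linarith
qed



lemma sq_powr:
  fixes x :: real assumes "x > 0" shows "(x^2) powr a = x powr (2*a)"
proof -
  have "x^2 = x powr 2" using powr_realpow[OF assms, of 2] by simp
  then show ?thesis by (simp add: powr_powr)
qed

lemma p_upper:
  assumes "real L \<ge> 1" "n \<ge> L^2"
  shows "p n \<le> zc * real L powr (-5/2)"
proof -
  have n1: "n \<ge> 1" using assms by (metis less_one not_less of_nat_0_less_iff of_nat_less_imp_less one_le_power power_one le_trans zero_less_one linorder_not_le of_nat_le_iff of_nat_1)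
  have "real n powr (-5/4) \<le> real (L^2) powr (-5/4)"
    by (rule powr_mono2') (use assms in auto)
  also have "real (L^2) powr (-5/4) = real L powr (-5/2)"
    using sq_powr[of "real L" "-5/4"] assms by simp
  finally show ?thesis unfolding p_def using n1 zc_pos by (simp add: mult_left_mono)
qed

lemma PP_single: "PP {n} = p n" unfolding PP_def by simp

lemma PP_split: "PP {N..} = 1 - (\<Sum>i<N. p i)"
proof -
  have u: "infsum p ({..<N} \<union> {N..}) = infsum p {..<N} + infsum p {N..}"
    by (rule infsum_Un_disjoint) (auto simp: p_summable_on)
  have "{..<N} \<union> {N..} = (UNIV :: nat set)" by auto
  then show ?thesis using u PP_UNIV unfolding PP_def by simp
qed

lemma tail_small:
  assumes "d > 0" shows "\<exists>N\<ge>1. PP {N..} \<le> d"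
proof -
  have "(\<lambda>n. \<Sum>i<n. p i) \<longlonglongrightarrow> 1" using p_sums unfolding sums_def .
  then obtain N0 where N0: "\<And>n. n \<ge> N0 \<Longrightarrow> dist (\<Sum>i<n. p i) 1 < d"
    using assms unfolding lim_sequentially by blast
  have "dist (\<Sum>i<max N0 1. p i) 1 < d" using N0[of "max N0 1"] by simp
  then have "PP {max N0 1..} \<le> d" unfolding PP_split dist_real_def by simp
  then show ?thesis by (intro exI[of _ "max N0 1"]) simp
qed

definition c1 :: real where "c1 = zc * 2 powr (-5/4)"

lemma c1_pos: "c1 > 0" unfolding c1_def using zc_pos by simp

lemma PP_lower:
  assumes "M \<ge> 1" shows "PP {M..} \<ge> c1 * real M powr (-1/4)"
proof -
  have "sum p {M..<2*M} \<le> PP {M..}"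
    by (rule finite_sum_le_has_sum[OF PP_has_sum]) (auto simp: p_nonneg)
  moreover have "sum p {M..<2*M} \<ge> sum (\<lambda>_. zc * real (2*M) powr (-5/4)) {M..<2*M}"
  proof (rule sum_mono)
    fix n assume n: "n \<in> {M..<2*M}"
    then have "n \<ge> 1" using assms by auto
    moreover have "real n powr (-5/4) \<ge> real (2*M) powr (-5/4)"
      by (rule powr_mono2') (use n assms in auto)
    ultimately show "zc * real (2*M) powr (-5/4) \<le> p n" unfolding p_def using zc_pos by simp
  qed
  moreover have "sum (\<lambda>_. zc * real (2*M) powr (-5/4)) {M..<2*M} = c1 * real M powr (-1/4)"
  proof -
    have e2: "real (2*M) powr (-5/4) = 2 powr (-5/4) * real M powr (-5/4)"
      using powr_mult[of 2 "real M" "-5/4"] by simp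
    have "sum (\<lambda>_. zc * real (2*M) powr (-5/4)) {M..<2*M} = real M * (zc * (2 powr (-5/4) * real M powr (-5/4)))"
      unfolding e2 by simp
    also have "real M * (zc * (2 powr (-5/4) * real M powr (-5/4))) = c1 * (real M powr 1 * real M powr (-5/4))"
      unfolding c1_def using assms by simp
    also have "real M powr 1 * real M powr (-5/4) = real M powr (-1/4)"
      by (subst powr_add[symmetric]) simp
    finally show ?thesis .
  qed
  ultimately show ?thesis by linarith
qed

lemma exp_neg_bound:
  fixes y :: real
  assumes "y > 0" shows "exp (- y) \<le> 256 / y^4"
proof -
  have "y/4 \<le> exp (y/4)" using exp_ge_add_one_self[of "y/4"] by linarith
  then have "(y/4)^4 \<le> exp (y/4)^4" by (rule power_mono) (use assms in auto)
  also have "exp (y/4)^4 = exp y" by (simp add: exp_of_nat_mult[symmetric])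
  finally have "y^4 / 256 \<le> exp y" by (simp add: power_divide)
  then have "exp (-y) * (y^4/256) \<le> exp (-y) * exp y" by (intro mult_left_mono) auto
  then have "exp (-y) * y^4 \<le> 256" by (simp add: exp_minus field_simps)
  then show ?thesis using assms by (simp add: field_simps)
qed

definition f3 :: "nat \<Rightarrow> real" where "f3 k = 256 / c1^4 * inverse (real k ^ 2)"

lemma f3_nonneg: "f3 k \<ge> 0" unfolding f3_def using c1_pos by simp

lemma f3_summable: "summable f3"
  unfolding f3_def by (intro summable_mult inverse_power_summable) simp

lemma bad3_bound:
  assumes "k \<ge> 1" shows "PP {..<k^2} ^ k \<le> f3 k"
proof -
  define x where "x = c1 * real k powr (-1/2)"
  have kpos: "real k > 0" using assms by simp
  have M: "k^2 \<ge> 1" using assms by simp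
  have "real (k^2) powr (-1/4) = real k powr (-1/2)"
    using sq_powr[of "real k" "-1/4"] kpos by simp
  then have low: "PP {k^2..} \<ge> x" using PP_lower[OF M] unfolding x_def by simp
  have "infsum p ({..<k^2} \<union> {k^2..}) = infsum p {..<k^2} + infsum p {k^2..}"
    by (rule infsum_Un_disjoint) (auto simp: p_summable_on)
  moreover have "{..<k^2} \<union> {k^2..} = (UNIV :: nat set)" by auto
  ultimately have "PP {..<k^2} = 1 - PP {k^2..}" using PP_UNIV unfolding PP_def by simp
  then have "PP {..<k^2} \<le> 1 - x" using low by simp
  also have "1 - x \<le> exp (-x)" using exp_ge_add_one_self[of "-x"] by simp
  finally have "PP {..<k^2} ^ k \<le> exp (-x) ^ k" by (rule power_mono) (rule PP_nonneg)
  also have "exp (-x) ^ k = exp (- (real k * x))" by (simp add: exp_of_nat_mult[symmetric])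
  also have "\<dots> \<le> 256 / (real k * x)^4"
    by (rule exp_neg_bound) (use kpos c1_pos in \<open>simp add: x_def\<close>)
  also have "(real k * x)^4 = c1^4 * real k ^ 2"
  proof -
    have "real k * real k powr (-1/2) = real k powr (1/2)"
      using powr_add[of "real k" 1 "-1/2"] kpos by simp
    then have "real k * x = c1 * real k powr (1/2)" unfolding x_def by (simp add: algebra_simps)
    moreover have "(real k powr (1/2))^4 = real k ^ 2"
    proof -
      have "(real k powr (1/2))^4 = real k powr 2" using powr_power[of "real k" "1/2" 4] kpos by simp
      also have "real k powr 2 = real k ^ 2" using powr_realpow[of "real k" 2] kpos by simp
      finally show ?thesis .
    qed
    ultimately show ?thesis by (simp add: power_mult_distrib)
  qed
  also have "256 / (c1^4 * real k ^ 2) = f3 k" unfolding f3_def by (simp add: field_simps)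
  finally show ?thesis .
qed

lemma tail_sum_small:
  fixes f :: "nat \<Rightarrow> real"
  assumes "summable f" "\<And>n. f n \<ge> 0" "d > 0"
  shows "\<exists>K0. \<forall>K\<ge>K0. \<forall>G. finite G \<longrightarrow> G \<subseteq> {K..} \<longrightarrow> sum f G \<le> d"
proof -
  obtain N where N: "\<And>n. n \<ge> N \<Longrightarrow> norm (\<Sum>i. f (i + n)) < d"
    using suminf_exist_split[OF assms(3,1)] by blast
  show ?thesis
  proof (intro exI[of _ N] allI impI)
    fix K G assume K: "N \<le> K" and G: "finite G" "G \<subseteq> {K..}"
    have inj: "inj_on (\<lambda>i. i + K) ((\<lambda>k. k - K) ` G)" by (auto simp: inj_on_def)
    have GG: "(\<lambda>i. i + K) ` ((\<lambda>k. k - K) ` G) = G"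
      using G(2) by (force simp: image_image)
    have "sum f G = sum (\<lambda>i. f (i + K)) ((\<lambda>k. k - K) ` G)"
      using sum.reindex[OF inj, of f] GG by (simp add: comp_def)
    also have "\<dots> \<le> (\<Sum>i. f (i + K))"
      by (rule sum_le_suminf) (use summable_ignore_initial_segment[OF assms(1)] G assms(2) in auto)
    also have "\<dots> < d" using N[OF K] by simp
    finally show "sum f G \<le> d" by simp
  qed
qed

lemma bad4_sum:
  assumes "K \<ge> 1"
  shows "(\<Sum>j<m. real j * (zc * real (max (j+1) K) powr (-5/2))) \<le> real K powr (-1/4)"
proof -
  have "(\<Sum>j<m. real j * (zc * real (max (j+1) K) powr (-5/2)))
      \<le> (\<Sum>j<m. zc * real K powr (-1/4) * real (Suc j) powr (-5/4))"
  proof (rule sum_mono)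
    fix j
    define L where "L = real (max (j+1) K)"
    have L1: "L \<ge> real (Suc j)" "L \<ge> real K" unfolding L_def by auto
    have "L powr (-5/2) = L powr (-1/4) * L powr (-9/4)"
      by (subst powr_add[symmetric]) simp
    also have "\<dots> \<le> real K powr (-1/4) * real (Suc j) powr (-9/4)"
      by (intro mult_mono powr_mono2') (use L1 assms in auto)
    finally have a: "L powr (-5/2) \<le> real K powr (-1/4) * real (Suc j) powr (-9/4)" .
    have e3: "real (Suc j) * real (Suc j) powr (-9/4) = real (Suc j) powr (-5/4)"
    proof -
      have "real (Suc j) = real (Suc j) powr 1" by simp
      then have "real (Suc j) * real (Suc j) powr (-9/4) = real (Suc j) powr 1 * real (Suc j) powr (-9/4)"
        by simp
      also have "\<dots> = real (Suc j) powr (-5/4)" by (subst powr_add[symmetric]) simp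
      finally show ?thesis .
    qed
    have e4: "real (Suc j) * (real K powr (-1/4) * real (Suc j) powr (-9/4))
        = real K powr (-1/4) * real (Suc j) powr (-5/4)"
      by (subst mult.left_commute) (subst e3, rule refl)
    have "real j * L powr (-5/2) \<le> real (Suc j) * (real K powr (-1/4) * real (Suc j) powr (-9/4))"
      by (intro mult_mono a) auto
    also note e4
    finally have b: "real j * L powr (-5/2) \<le> real K powr (-1/4) * real (Suc j) powr (-5/4)" .
    then show "real j * (zc * real (max (j+1) K) powr (-5/2)) \<le> zc * real K powr (-1/4) * real (Suc j) powr (-5/4)"
    proof -
      have "real j * (zc * L powr (-5/2)) = zc * (real j * L powr (-5/2))" by (simp add: algebra_simps)
      also have "\<dots> \<le> zc * (real K powr (-1/4) * real (Suc j) powr (-5/4))"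
        by (rule mult_left_mono[OF b]) (use zc_pos in simp)
      finally show ?thesis unfolding L_def by (simp add: mult.assoc)
    qed
  qed
  also have "\<dots> = zc * real K powr (-1/4) * (\<Sum>j<m. real (Suc j) powr (-5/4))"
    by (simp add: sum_distrib_left)
  also have "\<dots> \<le> zc * real K powr (-1/4) * (\<Sum>n. real (Suc n) powr (-5/4))"
    by (intro mult_left_mono sum_le_suminf S0_summable) (use zc_pos in auto)
  also have "\<dots> = real K powr (-1/4)" unfolding zc_def using S0_pos by simp
  finally show ?thesis .
qed



lemma powr_quarter_small:
  assumes "d > 0" "real K \<ge> (1/d)^4"
  shows "real K powr (-1/4) \<le> d"
proof -
  have pos: "(1/d)^4 > 0" using assms by simp
  have "real K powr (-1/4) \<le> ((1/d)^4) powr (-1/4)"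
    by (rule powr_mono2') (use assms pos in auto)
  also have "(1/d)^4 = (1/d) powr 4" using powr_realpow[of "1/d" 4] assms by simp
  also have "((1/d) powr 4) powr (-1/4) = (1/d) powr (-1)" by (simp add: powr_powr)
  also have "\<dots> = d" using powr_neg_one[of "1/d"] assms by simp
  finally show ?thesis .
qed

lemma prod_PP_one:
  fixes i m :: nat
  assumes "i < m" shows "(\<Prod>l<m. PP (if l = i then X else UNIV)) = PP X"
proof -
  have "(\<Prod>l<m. PP (if l = i then X else UNIV)) = (\<Prod>l<m. if l = i then PP X else 1)"
    by (rule prod.cong) (auto simp: PP_UNIV)
  also have "\<dots> = PP X" using assms by (simp add: prod.delta)
  finally show ?thesis .
qed

lemma prod_PP_two:
  fixes i j m :: nat
  assumes "i < j" "j < m" shows "(\<Prod>l<m. PP (if l = i \<or> l = j then X else UNIV)) = PP X ^ 2"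
proof -
  have "(\<Prod>l<m. PP (if l = i \<or> l = j then X else UNIV))
      = (\<Prod>l<m. (if l = i then PP X else 1) * (if l = j then PP X else 1))"
    by (rule prod.cong) (use assms in \<open>auto simp: PP_UNIV\<close>)
  also have "\<dots> = (\<Prod>l<m. if l = i then PP X else 1) * (\<Prod>l<m. if l = j then PP X else 1)"
    by (rule prod.distrib)
  also have "\<dots> = PP X ^ 2" using assms by (simp add: prod.delta power2_eq_square)
  finally show ?thesis .
qed

lemma prod_PP_first:
  fixes k m :: nat
  assumes "k \<le> m" shows "(\<Prod>l<m. PP (if l < k then X else UNIV)) = PP X ^ k"
proof -
  have "(\<Prod>l<m. PP (if l < k then X else UNIV)) = (\<Prod>l<m. if l < k then PP X else 1)"
    by (rule prod.cong) (auto simp: PP_UNIV)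
  also have "\<dots> = (\<Prod>l\<in>{..<m} \<inter> {l. l < k}. PP X) * (\<Prod>l\<in>{..<m} \<inter> - {l. l < k}. 1)"
    by (rule prod.If_cases) simp
  also have "{..<m} \<inter> {l. l < k} = {..<k}" using assms by auto
  finally show ?thesis by simp
qed

lemma mem_B1:
  assumes "length s = m" "i < m"
  shows "s \<in> cyl m (\<lambda>l. if l = i then X else UNIV) \<longleftrightarrow> s!i \<in> X"
  using assms unfolding cyl_def by auto

lemma mem_B3:
  assumes "length s = m" "k \<le> m"
  shows "s \<in> cyl m (\<lambda>l. if l < k then X else UNIV) \<longleftrightarrow> (\<forall>l<k. s!l \<in> X)"
  using assms unfolding cyl_def by auto

lemma mem_B4:
  assumes "length s = m" "i < m" "j < m"
  shows "s \<in> cyl m (\<lambda>l. if l = i \<or> l = j then {n} else UNIV) \<longleftrightarrow> s!i = n \<and> s!j = n"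
  using assms unfolding cyl_def by auto

lemma set_take_nth:
  assumes "k \<le> length s" shows "set (take k s) = (\<lambda>i. s!i) ` {..<k}"
proof -
  show ?thesis
  proof (rule set_eqI)
    fix x
    have "x \<in> set (take k s) \<longleftrightarrow> (\<exists>i<length (take k s). take k s ! i = x)" by (rule in_set_conv_nth)
    also have "\<dots> \<longleftrightarrow> (\<exists>i<k. s ! i = x)" using assms by auto
    also have "\<dots> \<longleftrightarrow> x \<in> (\<lambda>i. s!i) ` {..<k}" by auto
    finally show "x \<in> set (take k s) \<longleftrightarrow> x \<in> (\<lambda>i. s!i) ` {..<k}" .
  qed
qed



lemma main_part:
  fixes \<epsilon> :: real assumes eps: "\<epsilon> > 0"
  shows "\<exists>K N :: nat. K \<ge> 1 \<and> N \<ge> 1 \<and>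
        (\<forall>m. m \<ge> K \<longrightarrow>
          (\<exists>E. E \<subseteq> seqs m \<and>
             prod_measure m E \<ge> 1 - \<epsilon> \<and>
             (\<forall>s\<in>E. Max (set (take K s)) \<le> N) \<and>
             (\<forall>s\<in>E. \<forall>k. K \<le> k \<and> k \<le> m \<longrightarrow> Max (set (take k s)) \<ge> k ^ 2) \<and>
             (\<forall>s\<in>E. \<forall>k. K \<le> k \<and> k \<le> m \<longrightarrow>
                card {i. i < k \<and> s ! i = Max (set (take k s))} = 1)))"
proof -
  define d where "d = \<epsilon>/3"
  have d: "d > 0" unfolding d_def using eps by simp
  obtain K0 where K0: "\<forall>K\<ge>K0. \<forall>G. finite G \<longrightarrow> G \<subseteq> {K..} \<longrightarrow> sum f3 G \<le> d"
    using tail_sum_small[OF f3_summable f3_nonneg d] by blast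
  define K where "K = max (max K0 (nat \<lceil>(1/d)^4\<rceil>)) 1"
  have K1: "K \<ge> 1" "K \<ge> K0" unfolding K_def by auto
  have "(1/d)^4 \<le> real (nat \<lceil>(1/d)^4\<rceil>)" by (rule real_nat_ceiling_ge)
  also have "real (nat \<lceil>(1/d)^4\<rceil>) \<le> real K" unfolding K_def by simp
  finally have Kd: "real K powr (-1/4) \<le> d" by (rule powr_quarter_small[OF d])
  have dK: "d / real K > 0" using d K1 by simp
  obtain N where N: "N \<ge> 1" "PP {N..} \<le> d / real K" using tail_small[OF dK] by blast
  have KN: "real K * PP {N..} \<le> d"
  proof -
    have "real K * PP {N..} \<le> real K * (d / real K)" by (rule mult_left_mono[OF N(2)]) simp
    also have "\<dots> = d" using K1 by simp
    finally show ?thesis .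
  qed
  show ?thesis
  proof (rule exI[of _ K], rule exI[of _ N], intro conjI allI impI)
    show "K \<ge> 1" "N \<ge> 1" using K1 N by auto
    fix m assume m: "K \<le> m"
    define B2 where "B2 i = cyl m (\<lambda>l. if l = i then {N..} else UNIV)" for i
    define B3 where "B3 k = cyl m (\<lambda>l. if l < k then {..<k^2} else UNIV)" for k
    define g where "g j = zc * real (max (j+1) K) powr (-5/2)" for j
    define T where "T j i = (\<Union>n\<in>{(max (j+1) K)^2..}. cyl m (\<lambda>l. if l = i \<or> l = j then {n} else UNIV))" for j i
    define J where "J = {(j,i). i < j \<and> j < (m::nat)}"
    define Bad where "Bad = (\<Union>i\<in>{..<K}. B2 i) \<union> (\<Union>k\<in>{K..m}. B3 k) \<union> (\<Union>x\<in>J. case_prod T x)"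
    define E where "E = seqs m - Bad"

    have fb2: "fb m (\<Union>i\<in>{..<K}. B2 i) d"
    proof (rule fb_UN[where c="\<lambda>_. PP {N..}"])
      fix i assume "i \<in> {..<K}"
      then have im: "i < m" using m by auto
      show "fb m (B2 i) (PP {N..})"
        using fb_cyl[of m "\<lambda>l. if l = i then {N..} else UNIV"] prod_PP_one[OF im] unfolding B2_def by simp
    next
      fix G assume G: "finite G" "G \<subseteq> {..<K}"
      then have "card G \<le> K" using card_mono[of "{..<K}" G] by simp
      then have "real (card G) * PP {N..} \<le> real K * PP {N..}"
        by (intro mult_right_mono) (auto simp: PP_nonneg)
      then show "sum (\<lambda>_. PP {N..}) G \<le> d" using KN by simp
    qed

    have fb3: "fb m (\<Union>k\<in>{K..m}. B3 k) d"
    proof (rule fb_UN[where c=f3])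
      fix k assume k: "k \<in> {K..m}"
      then have km: "k \<le> m" by simp
      have "fb m (B3 k) (PP {..<k^2} ^ k)"
        using fb_cyl[of m "\<lambda>l. if l < k then {..<k^2} else UNIV"] prod_PP_first[OF km] unfolding B3_def by simp
      then show "fb m (B3 k) (f3 k)"
        by (rule fb_mono) (use bad3_bound[of k] k K1 in auto)
    next
      fix G assume G: "finite G" "G \<subseteq> {K..m}"
      then have "G \<subseteq> {K..}" by auto
      then show "sum f3 G \<le> d" using K0 K1 G(1) by blast
    qed

    have fbT: "fb m (T j i) (g j)" if ij: "i < j" "j < m" for i j
      unfolding T_def
    proof (rule fb_UN[where c="\<lambda>n. p n ^ 2"])
      fix n assume n: "n \<in> {(max (j+1) K)^2..}"
      show "fb m (cyl m (\<lambda>l. if l = i \<or> l = j then {n} else UNIV)) (p n ^ 2)"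
        using fb_cyl[of m "\<lambda>l. if l = i \<or> l = j then {n} else UNIV"] prod_PP_two[OF ij] PP_single[of n]
        by simp
    next
      fix G assume G: "finite G" "G \<subseteq> {(max (j+1) K)^2..}"
      have "sum (\<lambda>n. p n ^ 2) G \<le> sum (\<lambda>n. g j * p n) G"
      proof (rule sum_mono)
        fix n assume "n \<in> G"
        then have n: "n \<ge> (max (j+1) K)^2" using G by auto
        have L: "real (max (j+1) K) \<ge> 1" using K1 by simp
        have "p n \<le> g j" unfolding g_def by (rule p_upper[OF L n])
        then have "p n * p n \<le> g j * p n" by (rule mult_right_mono) (rule p_nonneg)
        then show "p n ^ 2 \<le> g j * p n" by (simp add: power2_eq_square)
      qed
      also have "\<dots> = g j * sum p G" by (simp add: sum_distrib_left)
      also have "\<dots> \<le> g j * 1"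
      proof (rule mult_left_mono)
        show "sum p G \<le> 1" by (rule finite_sum_le_has_sum[OF p_has_sum G(1)]) (auto simp: p_nonneg)
        show "0 \<le> g j" unfolding g_def using zc_pos by simp
      qed
      finally show "sum (\<lambda>n. p n ^ 2) G \<le> g j" by simp
    qed

    have fb4: "fb m (\<Union>x\<in>J. case_prod T x) d"
    proof (rule fb_UN[where c="\<lambda>(j,i). g j"])
      fix x assume "x \<in> J"
      then obtain j i where x: "x = (j,i)" "i < j" "j < m" unfolding J_def by auto
      show "fb m (case x of (j,i) \<Rightarrow> T j i) (case x of (j,i) \<Rightarrow> g j)" using fbT[OF x(2,3)] x(1) by simp
    next
      fix G assume G: "finite G" "G \<subseteq> J"
      have JS: "J = Sigma {..<m} (\<lambda>j. {..<j})" unfolding J_def by auto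
      have finJ: "finite J" unfolding JS by simp
      have gnn: "g j \<ge> 0" for j unfolding g_def using zc_pos by simp
      have "sum (\<lambda>(j,i). g j) G \<le> sum (\<lambda>(j,i). g j) J"
        by (rule sum_mono2[OF finJ G(2)]) (auto simp: gnn)
      also have "\<dots> = (\<Sum>j<m. \<Sum>i<j. g j)" unfolding JS using sum.Sigma[of "{..<m}" "\<lambda>j. {..<j}" "\<lambda>j i. g j"] by simp
      also have "\<dots> = (\<Sum>j<m. real j * g j)" by simp
      also have "\<dots> \<le> real K powr (-1/4)" using bad4_sum[OF K1(1), of m] unfolding g_def .
      also have "\<dots> \<le> d" by (rule Kd)
      finally show "sum (\<lambda>(j,i). g j) G \<le> d" .
    qed

    have fbBad: "fb m Bad (d + d + d)" unfolding Bad_def by (rule fb_Un[OF fb_Un[OF fb2 fb3] fb4])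
    have fb0: "fb m (WW m - seqs m) 0"
    proof (rule fb_zero)
      fix s assume s: "s \<in> WW m - seqs m"
      then have len: "length s = m" by (simp add: WW_eq)
      then obtain x where x: "x \<in> set s" "\<not> x \<ge> 1" using s unfolding seqs_def WW_eq by auto
      then obtain l where l: "l < m" "s!l = x" using len by (auto simp: in_set_conv_nth)
      have "x = 0" using x by simp
      then have "\<exists>a\<in>{..<m}. p (s!a) = 0" using l by (intro bexI[of _ l]) (auto simp: p_def)
      then show "wt m s = 0" by (simp add: wt_def prod_zero_iff)
    qed
    have sub: "WW m - E \<subseteq> (WW m - seqs m) \<union> Bad" unfolding E_def by auto
    have fbE: "fb m (WW m - E) \<epsilon>"
      by (rule fb_mono[OF fb_Un[OF fb0 fbBad] sub]) (simp add: d_def)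
    have seqsW: "seqs m \<subseteq> WW m" unfolding seqs_def WW_eq by auto
    then have EW: "E \<subseteq> WW m" unfolding E_def by auto
    have meas: "prod_measure m E \<ge> 1 - \<epsilon>" by (rule measure_from_fb[OF EW fbE])
    have Eprop: "length s = m" "s \<notin> Bad" if "s \<in> E" for s
      using that unfolding E_def seqs_def by auto

    have P3: "Max (set (take k s)) \<ge> k^2" if s: "s \<in> E" and k: "K \<le> k" "k \<le> m" for s k
    proof -
      have "s \<notin> B3 k" using Eprop(2)[OF s] k unfolding Bad_def by auto
      then have "\<not> (\<forall>l<k. s!l \<in> {..<k^2})" using mem_B3[OF Eprop(1)[OF s] k(2)] unfolding B3_def by blast
      then obtain l where l: "l < k" "s!l \<ge> k^2" by (auto simp: not_less)
      have setA: "set (take k s) = (\<lambda>i. s!i) ` {..<k}" using set_take_nth[of k s] Eprop(1)[OF s] k by simp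
      have "s!l \<le> Max (set (take k s))" unfolding setA by (rule Max_ge) (use l in auto)
      then show ?thesis using l by simp
    qed

    show "\<exists>E. E \<subseteq> seqs m \<and>
             prod_measure m E \<ge> 1 - \<epsilon> \<and>
             (\<forall>s\<in>E. Max (set (take K s)) \<le> N) \<and>
             (\<forall>s\<in>E. \<forall>k. K \<le> k \<and> k \<le> m \<longrightarrow> Max (set (take k s)) \<ge> k ^ 2) \<and>
             (\<forall>s\<in>E. \<forall>k. K \<le> k \<and> k \<le> m \<longrightarrow>
                card {i. i < k \<and> s ! i = Max (set (take k s))} = 1)"
    proof (intro exI[of _ E] conjI ballI allI impI)
      show "E \<subseteq> seqs m" unfolding E_def by auto
      show "prod_measure m E \<ge> 1 - \<epsilon>" by (rule meas)
    next
      fix s assume s: "s \<in> E"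
      have lt: "s!i < N" if "i < K" for i
      proof -
        have im: "i < m" using that m by simp
        have "s \<notin> B2 i" using Eprop(2)[OF s] that unfolding Bad_def by auto
        then show ?thesis using mem_B1[OF Eprop(1)[OF s] im] unfolding B2_def by auto
      qed
      have setA: "set (take K s) = (\<lambda>i. s!i) ` {..<K}" using set_take_nth[of K s] Eprop(1)[OF s] m by simp
      have "(0::nat) \<in> {..<K}" using K1 by simp
      then have ne: "(\<lambda>i. s!i) ` {..<K} \<noteq> {}" by blast
      show "Max (set (take K s)) \<le> N" unfolding setA
        using Max_le_iff[of "(\<lambda>i. s!i) ` {..<K}" N] ne lt by (auto intro: less_imp_le)
    next
      fix s k assume s: "s \<in> E" and k: "K \<le> k \<and> k \<le> m"
      show "Max (set (take k s)) \<ge> k^2" using P3[OF s] k by blast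
    next
      fix s k assume s: "s \<in> E" and k: "K \<le> k \<and> k \<le> m"
      have len: "length s = m" by (rule Eprop(1)[OF s])
      define A where "A = (\<lambda>i. s!i) ` {..<k}"
      have setA: "set (take k s) = A" unfolding A_def using set_take_nth[of k s] len k by simp
      have finA: "finite A" unfolding A_def by simp
      have "(0::nat) \<in> {..<k}" using k K1 by simp
      then have neA: "A \<noteq> {}" unfolding A_def by blast
      define Mx where "Mx = Max A"
      have "Mx \<in> A" unfolding Mx_def by (rule Max_in[OF finA neA])
      then obtain i0 where i0: "i0 < k" "s!i0 = Mx" unfolding A_def by auto
      have big: "Mx \<ge> k^2" using P3[OF s, of k] k unfolding setA Mx_def by blast
      have noTie: False if ab: "a < b" "b < k" "s!a = Mx" "s!b = Mx" for a b
      proof -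
        have baJ: "(b,a) \<in> J" using ab k unfolding J_def by auto
        have "max (b+1) K \<le> k" using ab k by auto
        then have "(max (b+1) K)^2 \<le> k^2" by (rule power_mono) simp
        then have "(max (b+1) K)^2 \<le> Mx" using big by (rule le_trans)
        then have Mxin: "Mx \<in> {(max (b+1) K)^2..}" by simp
        have "s \<in> cyl m (\<lambda>l. if l = a \<or> l = b then {Mx} else UNIV)"
          using mem_B4[of s m a b Mx] len ab k by auto
        then have "s \<in> T b a" unfolding T_def using Mxin by blast
        then have "s \<in> (\<Union>x\<in>J. case_prod T x)" using baJ by force
        then show False using Eprop(2)[OF s] unfolding Bad_def by blast
      qed
      have "{i. i < k \<and> s ! i = Max (set (take k s))} = {i0}"
      proof (rule set_eqI)
        fix i
        show "i \<in> {i. i < k \<and> s ! i = Max (set (take k s))} \<longleftrightarrow> i \<in> {i0}"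
        proof
          assume "i \<in> {i. i < k \<and> s ! i = Max (set (take k s))}"
          then have i: "i < k" "s!i = Mx" unfolding setA Mx_def by auto
          show "i \<in> {i0}"
          proof (rule ccontr)
            assume "i \<notin> {i0}"
            then have "i \<noteq> i0" by simp
            then show False
            proof (cases "i < i0")
              case True then show False using noTie[of i i0] i i0 by blast
            next
              case False then have "i0 < i" using \<open>i \<noteq> i0\<close> by simp
              then show False using noTie[of i0 i] i i0 by blast
            qed
          qed
        next
          assume "i \<in> {i0}"
          then show "i \<in> {i. i < k \<and> s ! i = Max (set (take k s))}" using i0 unfolding setA Mx_def by simp
        qed
      qed
      then show "card {i. i < k \<and> s ! i = Max (set (take k s))} = 1" by simp
    qed
  qed
qed



lemma ln_le_8: fixes x :: real assumes "x \<ge> 1" shows "ln x \<le> 8 * x powr (1/8)"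
proof -
  have pos: "x powr (1/8) > 0" using assms by simp
  have "ln (x powr (1/8)) \<le> x powr (1/8) - 1" by (rule ln_le_minus_one[OF pos])
  then have "ln x / 8 \<le> x powr (1/8)" by simp
  then show ?thesis by simp
qed

lemma entropy_p: "finite_entropy p"
  unfolding finite_entropy_def
proof (rule summable_comparison_test'[where N=1])
  define C where "C = zc * (\<bar>ln zc\<bar> + 10)"
  show "summable (\<lambda>n. C * real n powr (-9/8))"
    by (rule summable_mult) (simp add: summable_real_powr_iff)
  fix n :: nat assume n: "n \<ge> 1"
  define x where "x = real n"
  have x1: "x \<ge> 1" using n unfolding x_def by simp
  have pn: "p n = zc * x powr (-5/4)" unfolding p_def x_def using n by simp
  have ppos: "p n > 0" using p_pos[OF n] .
  have lnp: "ln (p n) = ln zc + (-5/4) * ln x"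
    unfolding pn using zc_pos x1 by (simp add: ln_mult)
  have lnx0: "ln x \<ge> 0" using x1 by simp
  have q1: "x powr (1/8) \<ge> 1" using x1 by (simp add: ge_one_powr_ge_zero)
  have "\<bar>ln (p n)\<bar> \<le> \<bar>ln zc\<bar> + 5/4 * ln x" unfolding lnp using lnx0 by linarith
  also have "\<dots> \<le> \<bar>ln zc\<bar> + 10 * x powr (1/8)" using ln_le_8[OF x1] by linarith
  also have "\<dots> \<le> (\<bar>ln zc\<bar> + 10) * x powr (1/8)"
  proof -
    have "\<bar>ln zc\<bar> * 1 \<le> \<bar>ln zc\<bar> * x powr (1/8)" by (rule mult_left_mono[OF q1]) simp
    then show ?thesis by (simp add: distrib_right)
  qed
  finally have lnb: "\<bar>ln (p n)\<bar> \<le> (\<bar>ln zc\<bar> + 10) * x powr (1/8)" .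
  have "norm (- (p n * ln (p n))) = p n * \<bar>ln (p n)\<bar>" using ppos by (simp add: abs_mult)
  also have "\<dots> \<le> p n * ((\<bar>ln zc\<bar> + 10) * x powr (1/8))"
    by (rule mult_left_mono[OF lnb]) (use ppos in simp)
  also have "\<dots> = C * (x powr (-5/4) * x powr (1/8))" unfolding pn C_def by (simp add: algebra_simps)
  also have "x powr (-5/4) * x powr (1/8) = x powr (-9/8)"
    by (subst powr_add[symmetric]) simp
  finally show "norm (- (p n * ln (p n))) \<le> C * real n powr (-9/8)" unfolding x_def .
qed


theorem lemma2p5:
  shows "finite_entropy p \<and>
    (\<forall>\<epsilon>::real. \<epsilon> > 0 \<longrightarrow>
      (\<exists>K N :: nat. K \<ge> 1 \<and> N \<ge> 1 \<and>
        (\<forall>m. m \<ge> K \<longrightarrow>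
          (\<exists>E. E \<subseteq> seqs m \<and>
             prod_measure m E \<ge> 1 - \<epsilon> \<and>
             (\<forall>s\<in>E. Max (set (take K s)) \<le> N) \<and>
             (\<forall>s\<in>E. \<forall>k. K \<le> k \<and> k \<le> m \<longrightarrow> Max (set (take k s)) \<ge> k ^ 2) \<and>
             (\<forall>s\<in>E. \<forall>k. K \<le> k \<and> k \<le> m \<longrightarrow>
                card {i. i < k \<and> s ! i = Max (set (take k s))} = 1)))))"
  using entropy_p main_part by blast

end
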